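(* Let $n\ge 1$, $V=(\mathbb F_2)^n$, let $r\ge 1$ and let $\rho_1,\dots,\rho_r\in\mathrm{Sym}(V)$. Let $\Phi$ be the $r$-round long-key Feistel network whose encryption functions are \[ E_{(k_1,\dots,k_r)}=\bar\rho_1\sigma_{(0,k_1)}\bar\rho_2\sigma_{(0,k_2)}\cdots\bar\rho_r\sigma_{(0,k_r)},\qquad (k_1,\dots,k_r)\in V^r, \] and let $\Gamma(\Phi)=\langle E_{(k_1,\dots,k_r)}\mid (k_1,\dots,k_r)\in V^r\rangle\le \mathrm{Sym}(V\times V)$. Then \[ \langle \bar\rho_1\bar\rho_2\cdots\bar\rho_r,\ T(V\times V)\rangle \le \Gamma(\Phi). \] In particular $T(V\times V)\le\Gamma(\Phi)$.
   Context: Maps act on the right ($x\mapsto xf$) and products of maps are composed left to right ($fg$ means first $f$, then $g$); $+$ is bitwise XOR on $V$. For $\rho\in\mathrm{Sym}(V)$, the Feistel operator induced by $\rho$ is the map $\bar\rho: V\times V\to V\times V$, $(x_1,x_2)\bar\rho=(x_2,\ x_1+x_2\rho)$. For $(h,k)\in V\times V$, $\sigma_{(h,k)}:V\times V\to V\times V$ is defined by $(x_1,x_2)\sigma_{(h,k)}=(x_1+k,\ x_2+h)$, and $T(V\times V)=\{\sigma_{(h,k)}\mid (h,k)\in V\times V\}$. *)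

theory Defs
  imports "HOL-Analysis.Analysis" "HOL-Library.Z2" "HOL-Algebra.Bij" "HOL-Algebra.Generated_Groups"
begin

text \<open>V = (F_2)^n is modelled as bit ^ 'n for a finite index type 'n (so n >= 1);
  addition on bit ^ 'n is componentwise addition in F_2, i.e. bitwise XOR.
  Maps are HOL functions; the paper's left-to-right product f g (first f, then g)
  is the HOL composition g o f.\<close>

definition feistel :: "(bit ^ 'n \<Rightarrow> bit ^ 'n) \<Rightarrow> (bit ^ 'n) \<times> (bit ^ 'n) \<Rightarrow> (bit ^ 'n) \<times> (bit ^ 'n)"
  where "feistel \<rho> = (\<lambda>(x1, x2). (x2, x1 + \<rho> x2))"

definition sigma :: "(bit ^ 'n) \<times> (bit ^ 'n) \<Rightarrow> (bit ^ 'n) \<times> (bit ^ 'n) \<Rightarrow> (bit ^ 'n) \<times> (bit ^ 'n)"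
  where "sigma hk = (\<lambda>(x1, x2). (x1 + snd hk, x2 + fst hk))"

definition transl_group :: "((bit ^ 'n) \<times> (bit ^ 'n) \<Rightarrow> (bit ^ 'n) \<times> (bit ^ 'n)) set"
  where "transl_group = {sigma hk | hk. True}"

definition enc :: "(bit ^ 'n \<Rightarrow> bit ^ 'n) list \<Rightarrow> (bit ^ 'n) list
    \<Rightarrow> (bit ^ 'n) \<times> (bit ^ 'n) \<Rightarrow> (bit ^ 'n) \<times> (bit ^ 'n)"
  where "enc rhos ks = fold (\<lambda>(\<rho>, k) acc. sigma (0, k) \<circ> feistel \<rho> \<circ> acc) (zip rhos ks) id"

definition feistel_prod :: "(bit ^ 'n \<Rightarrow> bit ^ 'n) list \<Rightarrow> (bit ^ 'n) \<times> (bit ^ 'n) \<Rightarrow> (bit ^ 'n) \<times> (bit ^ 'n)"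
  where "feistel_prod rhos = fold (\<lambda>\<rho> acc. feistel \<rho> \<circ> acc) rhos id"

definition Gamma :: "(bit ^ 'n \<Rightarrow> bit ^ 'n) list \<Rightarrow> ((bit ^ 'n) \<times> (bit ^ 'n) \<Rightarrow> (bit ^ 'n) \<times> (bit ^ 'n)) set"
  where "Gamma rhos = generate (BijGroup UNIV) {enc rhos ks | ks. length ks = length rhos}"

end

theory Submission
  imports Defs
begin
lemma vadd_self[simp]: "(x::bit^'n) + x = 0"
  by (simp add: vec_eq_iff)
lemma Bij_UNIV: "Bij UNIV = {f. bij f}"
  by (auto simp: Bij_def)
lemma multG: "f \<in> Bij UNIV \<Longrightarrow> g \<in> Bij UNIV \<Longrightarrow> g \<otimes>\<^bsub>BijGroup UNIV\<^esub> f = g \<circ> f"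
  by (simp add: BijGroup_def compose_def restrict_def comp_def)
lemma carrierG: "carrier (BijGroup UNIV) = {f. bij f}"
  by (simp add: BijGroup_def Bij_UNIV)

lemma bij_feistel: "bij (feistel \<rho>)"
proof (rule o_bij[where g="\<lambda>(y1,y2). (y2 + \<rho> y1, y1)"])
  show "(\<lambda>(y1, y2). (y2 + \<rho> y1, y1)) \<circ> feistel \<rho> = id"
    by (auto simp: feistel_def fun_eq_iff add.assoc)
  show "feistel \<rho> \<circ> (\<lambda>(y1, y2). (y2 + \<rho> y1, y1)) = id"
    by (auto simp: feistel_def fun_eq_iff add.assoc)
qed
lemma bij_sigma: "bij (sigma hk)"
  by (rule o_bij[where g="sigma hk"]) (auto simp: sigma_def fun_eq_iff add.assoc)
lemma sigma00: "sigma (0,0) = id"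
  by (auto simp: sigma_def fun_eq_iff)
lemma comm: "sigma (k,0) \<circ> feistel \<rho> = feistel \<rho> \<circ> sigma (0,k)"
  by (auto simp: sigma_def feistel_def fun_eq_iff add_ac)
lemma sigma_split: "sigma (h,k) = sigma (h,0) \<circ> sigma (0,k)"
  by (auto simp: sigma_def fun_eq_iff add_ac)

lemma bij_fold: "bij acc \<Longrightarrow> bij (fold (\<lambda>(\<rho>, k) acc. sigma (0, k) \<circ> feistel \<rho> \<circ> acc) xs acc)"
  by (induction xs arbitrary: acc) (auto intro!: bij_comp bij_sigma bij_feistel)
lemma bij_enc: "bij (enc rs ks)"
  unfolding enc_def by (rule bij_fold) simp
lemma enc_snoc: "length rs = length ks \<Longrightarrow>
  enc (rs@[\<rho>]) (ks@[k]) = sigma (0,k) \<circ> feistel \<rho> \<circ> enc rs ks"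
  by (simp add: enc_def)
lemma fp_snoc: "feistel_prod (rs@[\<rho>]) = feistel \<rho> \<circ> feistel_prod rs"
  by (simp add: feistel_prod_def)
lemma enc_zero: "enc rs (replicate (length rs) 0) = feistel_prod rs"
proof (induction rs rule: rev_induct)
  case Nil then show ?case by (simp add: enc_def feistel_prod_def)
next
  case (snoc x xs)
  have L: "replicate (length (xs@[x])) 0 = replicate (length xs) 0 @ [0]"
    by (simp add: replicate_append_same)
  have "enc (xs@[x]) (replicate (length xs) 0 @ [0]) = sigma (0,0) \<circ> feistel x \<circ> enc xs (replicate (length xs) 0)"
    by (rule enc_snoc) simp
  then have "enc (xs@[x]) (replicate (length xs) 0 @ [0]) = feistel_prod (xs@[x])"
    using snoc by (simp only: fp_snoc sigma00) simp
  then show ?case by (simp only: L)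
qed

lemma cancel:
  assumes H: "subgroup H (BijGroup UNIV)" and a: "bij a" and b: "b \<in> H" and ab: "a \<circ> b \<in> H"
  shows "a \<in> H"
proof -
  interpret G: group "BijGroup UNIV" by (rule group_BijGroup)
  have bc: "b \<in> carrier (BijGroup UNIV)" using b subgroup.subset[OF H] by blast
  have ac: "a \<in> carrier (BijGroup UNIV)" using a by (simp add: carrierG)
  have "a \<otimes>\<^bsub>BijGroup UNIV\<^esub> b \<in> H" using ab ac bc by (simp add: multG carrierG Bij_UNIV)
  then have "(a \<otimes>\<^bsub>BijGroup UNIV\<^esub> b) \<otimes>\<^bsub>BijGroup UNIV\<^esub> inv\<^bsub>BijGroup UNIV\<^esub> b \<in> H"
    using b H by (simp add: subgroup.m_closed subgroup.m_inv_closed)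
  also have "(a \<otimes>\<^bsub>BijGroup UNIV\<^esub> b) \<otimes>\<^bsub>BijGroup UNIV\<^esub> inv\<^bsub>BijGroup UNIV\<^esub> b = a"
    using ac bc by (simp add: G.m_assoc)
  finally show ?thesis .
qed

lemma closed:
  assumes H: "subgroup H (BijGroup UNIV)" and a: "a \<in> H" and b: "b \<in> H"
  shows "a \<circ> b \<in> H"
proof -
  have "a \<in> carrier (BijGroup UNIV)" "b \<in> carrier (BijGroup UNIV)"
    using a b subgroup.subset[OF H] by blast+
  then have "a \<circ> b = a \<otimes>\<^bsub>BijGroup UNIV\<^esub> b" by (simp add: multG carrierG Bij_UNIV)
  then show ?thesis using subgroup.m_closed[OF H a b] by simp
qed

theorem lemma4p1:
  fixes rhos :: "(bit ^ 'n \<Rightarrow> bit ^ 'n) list"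
  assumes "length rhos \<ge> 1"
    and "\<forall>\<rho> \<in> set rhos. bij \<rho>"
  shows "generate (BijGroup UNIV) (insert (feistel_prod rhos) transl_group) \<subseteq> Gamma rhos
         \<and> transl_group \<subseteq> Gamma rhos"
proof -
  interpret G: group "BijGroup (UNIV :: ((bit ^ 'n) \<times> (bit ^ 'n)) set)" by (rule group_BijGroup)
  have sub: "subgroup (Gamma rhos) (BijGroup UNIV)"
    unfolding Gamma_def
    by (rule G.generate_is_subgroup) (auto simp: carrierG bij_enc)
  have mem: "enc rhos ks \<in> Gamma rhos" if "length ks = length rhos" for ks
    unfolding Gamma_def by (rule generate.incl) (use that in blast)
  obtain rs \<rho> where rh: "rhos = rs @ [\<rho>]"
    using assms(1) by (metis One_nat_def le_numeral_extra(2) list.size(3) rev_exhaust)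
  have P: "feistel_prod rhos \<in> Gamma rhos"
    using mem[of "replicate (length rhos) 0"] enc_zero[of rhos] by simp
  have s0k: "sigma (0,k) \<in> Gamma rhos" for k
  proof (rule cancel[OF sub bij_sigma P])
    have "sigma (0,k) \<circ> feistel_prod rhos = enc rhos (replicate (length rs) 0 @ [k])"
      by (simp add: rh enc_snoc enc_zero fp_snoc comp_assoc)
    then show "sigma (0,k) \<circ> feistel_prod rhos \<in> Gamma rhos"
      using mem by (simp add: rh)
  qed
  have sk0: "sigma (k,0) \<in> Gamma rhos" for k
  proof (rule cancel[OF sub bij_sigma P])
    have e: "sigma (k,0) \<circ> feistel_prod rhos = feistel \<rho> \<circ> sigma (0,k) \<circ> feistel_prod rs"
      by (simp add: rh fp_snoc comm flip: comp_assoc)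
    show "sigma (k,0) \<circ> feistel_prod rhos \<in> Gamma rhos"
    proof (cases rs rule: rev_exhaust)
      case Nil
      then have "sigma (k,0) \<circ> feistel_prod rhos = feistel_prod rhos \<circ> sigma (0,k)"
        using e rh by (simp add: feistel_prod_def)
      then show ?thesis using closed[OF sub P s0k] by simp
    next
      case (snoc rs' \<rho>')
      have e1: "enc ((rs'@[\<rho>'])@[\<rho>]) ((replicate (length rs') 0 @ [k]) @ [0])
          = sigma (0,0) \<circ> feistel \<rho> \<circ> enc (rs'@[\<rho>']) (replicate (length rs') 0 @ [k])"
        by (rule enc_snoc) simp
      have e2: "enc (rs'@[\<rho>']) (replicate (length rs') 0 @ [k])
          = sigma (0,k) \<circ> feistel \<rho>' \<circ> enc rs' (replicate (length rs') 0)"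
        by (rule enc_snoc) simp
      have "sigma (k,0) \<circ> feistel_prod rhos = enc rhos (replicate (length rs') 0 @ [k] @ [0])"
        using e rh snoc e1 e2 enc_zero[of rs'] by (simp add: sigma00 fp_snoc comp_assoc)
      then show ?thesis using mem rh snoc by simp
    qed
  qed
  have T: "transl_group \<subseteq> Gamma rhos"
    unfolding transl_group_def
  proof clarify
    fix hk :: "(bit^'n) \<times> (bit^'n)"
    obtain h k where "hk = (h,k)" by fastforce
    then show "sigma hk \<in> Gamma rhos"
      using closed[OF sub sk0 s0k] sigma_split by metis
  qed
  have "generate (BijGroup UNIV) (insert (feistel_prod rhos) transl_group) \<subseteq> Gamma rhos"
    by (rule G.generate_subgroup_incl[OF _ sub]) (use P T in blast)
  with T show ?thesis by blast
qed
end
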